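(* Let $K$ be a positive integer, $\tau\in\mathbb H$, and for $u,v\in\mathbb C$ write $z=e^{2\pi i u}$, $y=e^{2\pi i v}$, $q=e^{2\pi i\tau}$. Define the level $K$ Appell-Lerch sum $$A_K(u,v;\tau)=e^{\pi i K u}\sum_{n\in\mathbb Z}\frac{(-1)^{Kn}q^{Kn(n+1)/2}y^n}{1-zq^n},$$ and let $A_1$ denote the case $K=1$, i.e. $A_1(u,v;\tau)=e^{\pi i u}\sum_{n\in\mathbb Z}\frac{(-1)^{n}q^{n(n+1)/2}y^n}{1-zq^n}$. Then, whenever all terms are defined (i.e. no denominator vanishes), $$A_K(u,v;\tau)=\sum_{m=0}^{K-1}e^{2\pi i m u}\,A_1\Big(Ku,\;v+m\tau+\tfrac{K-1}{2};\;K\tau\Big)$$ and $$A_K(u,v;\tau)=K^{-1}e^{\pi i (K-1)u}\sum_{m=0}^{K-1}A_1\Big(u,\;\tfrac{v}{K}+\tfrac{m}{K}+\tau\tfrac{K-1}{2K};\;\tfrac{\tau}{K}\Big).$$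
   Context: The series defining $A_K$ converges for $\tau\in\mathbb H$ and all $v\in\mathbb C$, provided $u\notin\mathbb Z+\mathbb Z\tau$. *)

theory Defs
  imports "HOL-Analysis.Analysis"
begin

text \<open>The powers q^(K n (n+1)/2), y^n, z q^n are written via exp,
  and the bilateral sum over n in Z is an unordered (absolutely convergent) sum.\<close>

definition appell_lerch :: "nat \<Rightarrow> complex \<Rightarrow> complex \<Rightarrow> complex \<Rightarrow> complex" where
  "appell_lerch K u v \<tau> =
     exp (pi * \<i> * of_nat K * u) *
     (\<Sum>\<^sub>\<infinity>n\<in>(UNIV::int set).
        ((-1) powi (int K * n)) * exp (pi * \<i> * \<tau> * of_nat K * of_int n * of_int (n + 1))
          * exp (2 * pi * \<i> * of_int n * v)
          / (1 - exp (2 * pi * \<i> * (u + of_int n * \<tau>))))"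

definition denoms_ok :: "complex \<Rightarrow> complex \<Rightarrow> bool" where
  "denoms_ok u \<tau> \<longleftrightarrow> (\<forall>n::int. exp (2 * pi * \<i> * (u + of_int n * \<tau>)) \<noteq> 1)"

end

theory Submission
  imports Defs
begin


lemma neg1_powi: "((-1::complex) powi m) = exp (pi * \<i> * of_int m)"
  using exp_power_int[of "of_real pi * \<i>" m] by (simp add: mult_ac)

lemma exp_abs_summable: "(\<lambda>n::int. exp (- real_of_int \<bar>n\<bar>)) summable_on UNIV"
proof -
  have g: "(\<lambda>n::nat. exp (- real n)) summable_on UNIV"
  proof (rule norm_summable_imp_summable_on)
    have "summable (\<lambda>n. exp (-1::real) ^ n)" by (rule summable_geometric) simp
    thus "summable (\<lambda>n. norm (exp (- real n)))"
      by (simp add: exp_of_nat_mult[symmetric])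
  qed
  have 1: "(\<lambda>n::int. exp (- real_of_int \<bar>n\<bar>)) summable_on range int"
    by (subst summable_on_reindex) (use g in \<open>auto simp: o_def\<close>)
  have 2: "(\<lambda>n::int. exp (- real_of_int \<bar>n\<bar>)) summable_on range (\<lambda>n. - int n)"
    by (subst summable_on_reindex) (use g in \<open>auto simp: o_def inj_on_def\<close>)
  have "UNIV = range int \<union> range (\<lambda>n. - int n)"
    by auto (metis int_cases2 rangeI)
  thus ?thesis using summable_on_union[OF 1 2] by simp
qed

lemma gauss_bound:
  fixes c b :: real and n :: int
  assumes "c > 0"
  shows "exp (- c * n^2 + b * n) \<le> exp ((\<bar>b\<bar>+1)^2/(4*c)) * exp (- real_of_int \<bar>n\<bar>)"
proof -
  define x where "x = \<bar>real_of_int n\<bar>"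
  define B where "B = \<bar>b\<bar> + 1"
  have bn: "b * n \<le> \<bar>b\<bar> * x" unfolding x_def by (metis abs_ge_self abs_mult)
  have n2: "real_of_int n^2 = x^2" unfolding x_def by simp
  have sq: "0 \<le> (2*c*x - B)^2" by simp
  have e: "(2*c*x - B)^2 = B^2 - 4*c*(- c * x^2 + B * x)"
    by (simp add: power2_eq_square algebra_simps)
  have "4*c*(- c * x^2 + B * x) \<le> B^2"
    using sq e by linarith
  hence "- c * x^2 + B * x \<le> B^2/(4*c)" using assms by (subst pos_le_divide_eq) (auto simp: mult_ac)
  hence "- c * n^2 + b * n \<le> (\<bar>b\<bar>+1)^2/(4*c) + (- real_of_int \<bar>n\<bar>)"
  proof -
    have "b * n \<le> (B - 1) * x" using bn unfolding B_def by simp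
    hence "- c * n^2 + b * n \<le> - c * x^2 + B * x - x" using n2 by (simp add: algebra_simps)
    thus ?thesis using \<open>- c * x^2 + B * x \<le> B^2/(4*c)\<close> unfolding B_def x_def by linarith
  qed
  thus ?thesis by (simp add: exp_add[symmetric])
qed

definition F :: "nat \<Rightarrow> complex \<Rightarrow> complex \<Rightarrow> complex \<Rightarrow> int \<Rightarrow> complex" where
  "F K u v \<tau> n = ((-1) powi (int K * n)) * exp (pi * \<i> * \<tau> * of_nat K * of_int n * of_int (n + 1))
          * exp (2 * pi * \<i> * of_int n * v)
          / (1 - exp (2 * pi * \<i> * (u + of_int n * \<tau>)))"

lemma AL_F: "appell_lerch K u v \<tau> = exp (pi * \<i> * of_nat K * u) * infsum (F K u v \<tau>) UNIV"
  unfolding appell_lerch_def F_def ..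

lemma denom_bound:
  assumes "Im t > 0"
  obtains B where "\<And>n::int. norm (1 / (1 - exp (2 * pi * \<i> * (u + of_int n * t)))) \<le> B"
proof -
  define D where "D n = norm (1 / (1 - exp (2 * pi * \<i> * (u + of_int n * t))))" for n :: int
  define S where "S = {n::int. \<bar>Im u + n * Im t\<bar> \<le> 1}"
  define N where "N = ceiling ((1 + \<bar>Im u\<bar>) / Im t)"
  have "S \<subseteq> {-N..N}"
  proof
    fix n assume "n \<in> S"
    hence h: "\<bar>Im u + n * Im t\<bar> \<le> 1" by (simp add: S_def)
    have "\<bar>n\<bar> * Im t = \<bar>n * Im t\<bar>" using assms by (simp add: abs_mult)
    also have "\<dots> \<le> 1 + \<bar>Im u\<bar>" using h by linarith
    finally have "\<bar>real_of_int n\<bar> \<le> (1 + \<bar>Im u\<bar>) / Im t"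
      using assms by (simp add: pos_le_divide_eq)
    hence "\<bar>real_of_int n\<bar> \<le> N" unfolding N_def by linarith
    thus "n \<in> {-N..N}" by auto
  qed
  hence finS: "finite S" by (rule finite_subset) simp
  define B where "B = 2 + sum D S"
  have "D n \<le> B" for n
  proof (cases "n \<in> S")
    case True
    hence "D n \<le> sum D S" using finS by (intro member_le_sum) (auto simp: D_def)
    thus ?thesis unfolding B_def by linarith
  next
    case False
    define w where "w = 2 * pi * \<i> * (u + of_int n * t)"
    define r where "r = Re w"
    have r: "r = - 2 * pi * (Im u + n * Im t)" by (simp add: r_def w_def)
    have "\<bar>Im u + n * Im t\<bar> > 1" using False by (simp add: S_def)
    hence "\<bar>r\<bar> > 2 * pi" unfolding r by (simp add: abs_mult)
    hence r1: "r > 1 \<or> r < -1" using pi_gt3 by linarith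
    have e1: "exp (1::real) \<ge> 2" using exp_ge_add_one_self[of 1] by simp
    have "\<bar>1 - exp r\<bar> \<ge> 1/2"
      using r1
    proof
      assume "r > 1" hence "exp r \<ge> 2" using exp_ge_add_one_self[of r] by linarith
      thus ?thesis by linarith
    next
      assume "r < -1" hence "exp r \<le> exp (-1)" by simp
      also have "exp (-1::real) = 1 / exp 1" by (simp add: exp_minus field_simps)
      also have "\<dots> \<le> 1/2" using e1 by (simp add: field_simps)
      finally show ?thesis by linarith
    qed
    also have "\<bar>1 - exp r\<bar> = \<bar>norm (1::complex) - norm (exp w)\<bar>" by (simp add: r_def)
    also have "\<dots> \<le> norm (1 - exp w)" by (rule norm_triangle_ineq3)
    finally have "norm (1 - exp w) \<ge> 1/2" .
    hence "D n \<le> 2" unfolding D_def w_def[symmetric]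
      by (simp add: norm_divide divide_le_eq)
    moreover have "sum D S \<ge> 0" by (intro sum_nonneg) (auto simp: D_def)
    ultimately show ?thesis unfolding B_def by linarith
  qed
  thus ?thesis using that unfolding D_def by blast
qed

lemma F_summable:
  assumes "Im t > 0" "K \<ge> 1"
  shows "F K u v t summable_on UNIV"
proof -
  obtain B where B: "\<And>n::int. norm (1 / (1 - exp (2 * pi * \<i> * (u + of_int n * t)))) \<le> B"
    using denom_bound[OF assms(1)] by blast
  define c where "c = pi * Im t * K"
  define b where "b = - (pi * Im t * K + 2 * pi * Im v)"
  have c: "c > 0" unfolding c_def using assms by simp
  define M where "M = exp ((\<bar>b\<bar>+1)^2/(4*c))"
  have B0: "B \<ge> 0" using B[of 0] norm_ge_zero order_trans by blast
  have nb: "norm (F K u v t n) \<le> B * M * exp (- real_of_int \<bar>n\<bar>)" for n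
  proof -
    have nn: "norm ((-1::complex) powi (int K * n) * exp (pi * \<i> * t * of_nat K * of_int n * of_int (n + 1))
          * exp (2 * pi * \<i> * of_int n * v)) = exp (- c * n^2 + b * n)"
      unfolding neg1_powi by (simp add: c_def b_def exp_add[symmetric] power2_eq_square algebra_simps)
    have "F K u v t n = ((-1::complex) powi (int K * n) * exp (pi * \<i> * t * of_nat K * of_int n * of_int (n + 1))
          * exp (2 * pi * \<i> * of_int n * v)) * (1 / (1 - exp (2 * pi * \<i> * (u + of_int n * t))))"
      unfolding F_def by simp
    hence "norm (F K u v t n) = exp (- c * n^2 + b * n) * norm (1 / (1 - exp (2 * pi * \<i> * (u + of_int n * t))))"
      using nn by (simp only: norm_mult)
    also have "\<dots> \<le> exp (- c * n^2 + b * n) * B" by (intro mult_left_mono B) simp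
    also have "\<dots> \<le> M * exp (- real_of_int \<bar>n\<bar>) * B"
      unfolding M_def by (intro mult_right_mono gauss_bound c B0)
    finally show ?thesis by (simp add: mult_ac)
  qed
  have gs: "(\<lambda>n. norm (B * M * exp (- real_of_int \<bar>n\<bar>))) summable_on UNIV"
  proof -
    have "(\<lambda>n. B * M * exp (- real_of_int \<bar>n\<bar>)) summable_on UNIV"
      by (intro summable_on_cmult_right exp_abs_summable)
    moreover have "B * M \<ge> 0" using B0 by (simp add: M_def)
    ultimately show ?thesis by simp
  qed
  have "(\<lambda>n. norm (F K u v t n)) summable_on UNIV"
  proof (rule Infinite_Sum.abs_summable_on_comparison_test[where g = "\<lambda>n. B * M * exp (- real_of_int \<bar>n\<bar>)", OF gs])
    fix n :: int
    have "norm (F K u v t n) \<le> B * M * exp (- real_of_int \<bar>n\<bar>)" by (rule nb)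
    also have "\<dots> \<le> norm (B * M * exp (- real_of_int \<bar>n\<bar>))" by simp
    finally show "norm (F K u v t n) \<le> norm (B * M * exp (- real_of_int \<bar>n\<bar>))" .
  qed
  thus ?thesis by (simp add: summable_on_iff_abs_summable_on_complex)
qed

lemma pw1:
  assumes K: "K \<ge> 1" and d: "denoms_ok (of_nat K * u) (of_nat K * \<tau>)"
  shows "(\<Sum>m<K. exp (2 * pi * \<i> * of_nat m * u) *
           F 1 (of_nat K * u) (v + of_nat m * \<tau> + (of_nat K - 1) / 2) (of_nat K * \<tau>) n)
         = F K u v \<tau> n"
proof -
  define Z where "Z = exp (2 * pi * \<i> * (u + of_int n * \<tau>))"
  define N where "N = exp (pi * \<i> * of_int (int K * n)) * exp (pi * \<i> * \<tau> * of_nat K * of_int n * of_int (n + 1))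
          * exp (2 * pi * \<i> * of_int n * v)"
  have ZK: "exp (2 * pi * \<i> * (of_nat K * u + of_int n * (of_nat K * \<tau>))) = Z ^ K"
    unfolding Z_def exp_of_nat_mult[symmetric] by (simp add: algebra_simps)
  have ZK1: "Z ^ K \<noteq> 1" using d ZK unfolding denoms_ok_def by metis
  hence Z1: "Z \<noteq> 1" by auto
  have tm: "exp (2 * pi * \<i> * of_nat m * u) *
           F 1 (of_nat K * u) (v + of_nat m * \<tau> + (of_nat K - 1) / 2) (of_nat K * \<tau>) n
        = N * Z ^ m / (1 - Z ^ K)" for m
  proof -
    have "exp (2 * pi * \<i> * of_nat m * u) * (exp (pi * \<i> * of_int (int 1 * n)) *
           exp (pi * \<i> * (of_nat K * \<tau>) * of_nat 1 * of_int n * of_int (n + 1)) *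
           exp (2 * pi * \<i> * of_int n * (v + of_nat m * \<tau> + (of_nat K - 1) / 2)))
        = N * Z ^ m"
      unfolding N_def Z_def exp_of_nat_mult[symmetric] exp_add[symmetric]
      by (rule arg_cong[where f = exp]) (simp add: field_simps)
    thus ?thesis unfolding F_def neg1_powi ZK by (simp add: mult_ac)
  qed
  have "(\<Sum>m<K. exp (2 * pi * \<i> * of_nat m * u) *
           F 1 (of_nat K * u) (v + of_nat m * \<tau> + (of_nat K - 1) / 2) (of_nat K * \<tau>) n)
      = (\<Sum>m<K. N * Z ^ m / (1 - Z ^ K))" by (rule sum.cong[OF refl tm])
  also have "\<dots> = N / (1 - Z ^ K) * (\<Sum>m<K. Z ^ m)"
    by (simp add: sum_distrib_left sum_divide_distrib mult_ac)
  also have "\<dots> = N / (1 - Z)" using Z1 ZK1 by (simp add: sum_gp_strict)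
  also have "\<dots> = F K u v \<tau> n" unfolding F_def N_def Z_def neg1_powi by simp
  finally show ?thesis .
qed

lemma pw2:
  assumes K: "K \<ge> 1"
  shows "(\<Sum>m<K. F 1 u (v / of_nat K + of_nat m / of_nat K + \<tau> * (of_nat K - 1) / (2 * of_nat K)) (\<tau> / of_nat K) n)
         = (if int K dvd n then of_nat K * F K u v \<tau> (n div int K) else 0)"
proof -
  have K0: "(of_nat K :: complex) \<noteq> 0" using K by simp
  define w where "w = exp (2 * pi * \<i> * of_int n / of_nat K)"
  define P where "P = exp (pi * \<i> * of_int n) * exp (pi * \<i> * (\<tau> / of_nat K) * of_int n * of_int (n + 1))
     * exp (2 * pi * \<i> * of_int n * (v / of_nat K + \<tau> * (of_nat K - 1) / (2 * of_nat K)))"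
  define D where "D = 1 - exp (2 * pi * \<i> * (u + of_int n * (\<tau> / of_nat K)))"
  have tm: "F 1 u (v / of_nat K + of_nat m / of_nat K + \<tau> * (of_nat K - 1) / (2 * of_nat K)) (\<tau> / of_nat K) n
      = P * w ^ m / D" for m
  proof -
    have "exp (pi * \<i> * of_int (int 1 * n)) * exp (pi * \<i> * (\<tau> / of_nat K) * of_nat 1 * of_int n * of_int (n + 1)) *
           exp (2 * pi * \<i> * of_int n * (v / of_nat K + of_nat m / of_nat K + \<tau> * (of_nat K - 1) / (2 * of_nat K)))
        = P * w ^ m"
      unfolding P_def w_def exp_of_nat_mult[symmetric] exp_add[symmetric]
      by (rule arg_cong[where f = exp]) (use K in \<open>simp add: field_simps K0\<close>)
    thus ?thesis unfolding F_def neg1_powi D_def by (simp add: mult_ac)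
  qed
  have wK: "w ^ K = 1"
  proof -
    have "w ^ K = exp (\<i> * (of_int n * (of_real pi * 2)))"
      unfolding w_def exp_of_nat_mult[symmetric] by (rule arg_cong[where f = exp]) (use K in \<open>simp add: field_simps K0\<close>)
    thus ?thesis by simp
  qed
  have "(\<Sum>m<K. F 1 u (v / of_nat K + of_nat m / of_nat K + \<tau> * (of_nat K - 1) / (2 * of_nat K)) (\<tau> / of_nat K) n)
      = (\<Sum>m<K. P * w ^ m / D)" by (rule sum.cong[OF refl tm])
  also have "\<dots> = P / D * (\<Sum>m<K. w ^ m)"
    by (simp add: sum_distrib_left sum_divide_distrib mult_ac)
  also have "\<dots> = (if int K dvd n then of_nat K * F K u v \<tau> (n div int K) else 0)"
  proof (cases "int K dvd n")
    case True
    then obtain j where j: "n = int K * j" by blast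
    have "w = exp (\<i> * (of_int j * (of_real pi * 2)))"
      unfolding w_def j by (rule arg_cong[where f = exp]) (use K in \<open>simp add: field_simps K0\<close>)
    hence w1: "w = 1" by simp
    have "P / D = F K u v \<tau> j"
    proof -
      have "P = exp (pi * \<i> * of_int (int K * j)) * exp (pi * \<i> * \<tau> * of_nat K * of_int j * of_int (j + 1))
          * exp (2 * pi * \<i> * of_int j * v)"
        unfolding P_def j exp_add[symmetric]
        by (rule arg_cong[where f = exp]) (use K in \<open>simp add: field_simps K0\<close>)
      moreover have "D = 1 - exp (2 * pi * \<i> * (u + of_int j * \<tau>))"
        unfolding D_def j using K0 by (simp add: field_simps)
      ultimately show ?thesis unfolding F_def neg1_powi by simp
    qed
    moreover have "n div int K = j" using j K by simp
    ultimately show ?thesis using True w1 by (simp add: mult_ac)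
  next
    case False
    have "w \<noteq> 1"
    proof
      assume "w = 1"
      then obtain j :: int where "Im (2 * pi * \<i> * of_int n / of_nat K) = of_int (2 * j) * pi"
        unfolding w_def exp_eq_1 by blast
      hence "2 * pi * n / K = 2 * j * pi" by simp
      hence "real_of_int n = real K * j" using K by (simp add: field_simps)
      hence "n = int K * j" by (metis of_int_eq_iff of_int_mult of_int_of_nat_eq)
      thus False using False by simp
    qed
    thus ?thesis using False wK by (simp add: sum_gp_strict)
  qed
  finally show ?thesis .
qed

lemma has_sum_finsum:
  fixes f :: "'i \<Rightarrow> 'a \<Rightarrow> complex"
  assumes "finite I" "\<And>i. i \<in> I \<Longrightarrow> (f i has_sum s i) A"
  shows "((\<lambda>x. \<Sum>i\<in>I. f i x) has_sum (\<Sum>i\<in>I. s i)) A"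
  using assms by (induction I rule: finite_induct) (auto intro!: has_sum_add)

lemma infsum_finsum:
  fixes f :: "'i \<Rightarrow> 'a \<Rightarrow> complex"
  assumes "finite I" "\<And>i. i \<in> I \<Longrightarrow> f i summable_on A"
  shows "infsum (\<lambda>x. \<Sum>i\<in>I. f i x) A = (\<Sum>i\<in>I. infsum (f i) A)"
  using has_sum_finsum[OF assms(1), where f=f and s="\<lambda>i. infsum (f i) A" and A=A] assms(2)
  by (simp add: infsumI)

lemma part1:
  assumes K: "K \<ge> 1" and t: "Im \<tau> > 0" and d: "denoms_ok (of_nat K * u) (of_nat K * \<tau>)"
  shows "appell_lerch K u v \<tau> =
           (\<Sum>m<K. exp (2 * pi * \<i> * of_nat m * u) *
              appell_lerch 1 (of_nat K * u)
                (v + of_nat m * \<tau> + (of_nat K - 1) / 2) (of_nat K * \<tau>))"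
proof -
  define G where "G m n = exp (2 * pi * \<i> * of_nat m * u) *
           F 1 (of_nat K * u) (v + of_nat m * \<tau> + (of_nat K - 1) / 2) (of_nat K * \<tau>) n" for m n
  have tK: "Im (of_nat K * \<tau>) > 0" using K t by simp
  have sG: "G m summable_on UNIV" for m
    unfolding G_def by (intro summable_on_cmult_right F_summable tK) simp
  have "(\<Sum>m<K. exp (2 * pi * \<i> * of_nat m * u) *
              appell_lerch 1 (of_nat K * u)
                (v + of_nat m * \<tau> + (of_nat K - 1) / 2) (of_nat K * \<tau>))
      = exp (pi * \<i> * of_nat K * u) * (\<Sum>m<K. infsum (G m) UNIV)"
    unfolding AL_F G_def infsum_cmult_right' by (simp add: sum_distrib_left mult_ac)
  also have "(\<Sum>m<K. infsum (G m) UNIV) = infsum (\<lambda>n. \<Sum>m<K. G m n) UNIV"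
    by (rule infsum_finsum[symmetric]) (auto intro: sG)
  also have "\<dots> = infsum (F K u v \<tau>) UNIV"
    unfolding G_def pw1[OF K d] ..
  finally show ?thesis unfolding AL_F by simp
qed

lemma part2:
  assumes K: "K \<ge> 1" and t: "Im \<tau> > 0"
  shows "appell_lerch K u v \<tau> =
           inverse (of_nat K) * exp (pi * \<i> * (of_nat K - 1) * u) *
           (\<Sum>m<K. appell_lerch 1 u
               (v / of_nat K + of_nat m / of_nat K + \<tau> * (of_nat K - 1) / (2 * of_nat K))
               (\<tau> / of_nat K))"
proof -
  have K0: "(of_nat K :: complex) \<noteq> 0" using K by simp
  define G where "G m = F 1 u (v / of_nat K + of_nat m / of_nat K + \<tau> * (of_nat K - 1) / (2 * of_nat K)) (\<tau> / of_nat K)" for m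
  define H where "H n = (if int K dvd n then of_nat K * F K u v \<tau> (n div int K) else 0)" for n
  have tK: "Im (\<tau> / of_nat K) > 0" using K t by (simp add: Im_divide_of_nat)
  have sG: "G m summable_on UNIV" for m
    unfolding G_def by (intro F_summable tK) simp
  have "(\<Sum>m<K. appell_lerch 1 u
               (v / of_nat K + of_nat m / of_nat K + \<tau> * (of_nat K - 1) / (2 * of_nat K))
               (\<tau> / of_nat K))
      = exp (pi * \<i> * u) * (\<Sum>m<K. infsum (G m) UNIV)"
    unfolding AL_F G_def by (simp add: sum_distrib_left)
  also have "(\<Sum>m<K. infsum (G m) UNIV) = infsum (\<lambda>n. \<Sum>m<K. G m n) UNIV"
    by (rule infsum_finsum[symmetric]) (auto intro: sG)
  also have "\<dots> = infsum H UNIV"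
    unfolding G_def H_def pw2[OF K] ..
  also have "\<dots> = infsum H (range (\<lambda>j. int K * j))"
    by (rule infsum_cong_neutral) (auto simp: H_def)
  also have "\<dots> = infsum (H \<circ> (\<lambda>j. int K * j)) UNIV"
    by (rule infsum_reindex) (use K in \<open>auto simp: inj_on_def\<close>)
  also have "\<dots> = infsum (\<lambda>j. of_nat K * F K u v \<tau> j) UNIV"
    by (rule infsum_cong) (use K in \<open>auto simp: H_def\<close>)
  also have "\<dots> = of_nat K * infsum (F K u v \<tau>) UNIV" by (rule infsum_cmult_right')
  finally have e: "(\<Sum>m<K. appell_lerch 1 u
               (v / of_nat K + of_nat m / of_nat K + \<tau> * (of_nat K - 1) / (2 * of_nat K))
               (\<tau> / of_nat K)) = exp (pi * \<i> * u) * (of_nat K * infsum (F K u v \<tau>) UNIV)" .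
  have ex: "exp (pi * \<i> * (of_nat K - 1) * u) * exp (pi * \<i> * u) = exp (pi * \<i> * of_nat K * u)"
    unfolding exp_add[symmetric] by (rule arg_cong[where f = exp]) (simp add: algebra_simps)
  have gen: "\<And>k a b S::complex. k \<noteq> 0 \<Longrightarrow> inverse k * a * (b * (k * S)) = (a * b) * S"
    by (simp add: field_simps)
  show ?thesis unfolding e unfolding AL_F gen[OF K0] ex ..
qed


theorem mainTheorem1:
  fixes K :: nat and u v \<tau> :: complex
  assumes "K \<ge> 1" and "Im \<tau> > 0" and "denoms_ok u \<tau>"
  shows "(denoms_ok (of_nat K * u) (of_nat K * \<tau>) \<longrightarrow>
           appell_lerch K u v \<tau> =
           (\<Sum>m<K. exp (2 * pi * \<i> * of_nat m * u) *
              appell_lerch 1 (of_nat K * u)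
                (v + of_nat m * \<tau> + (of_nat K - 1) / 2) (of_nat K * \<tau>)))
       \<and> (denoms_ok u (\<tau> / of_nat K) \<longrightarrow>
           appell_lerch K u v \<tau> =
           inverse (of_nat K) * exp (pi * \<i> * (of_nat K - 1) * u) *
           (\<Sum>m<K. appell_lerch 1 u
               (v / of_nat K + of_nat m / of_nat K + \<tau> * (of_nat K - 1) / (2 * of_nat K))
               (\<tau> / of_nat K)))"
  using part1[OF assms(1,2)] part2[OF assms(1,2)] by blast

end
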